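(* Let $k\geq 2$ and $r\geq 2$ be integers, and let $z_1,\dots,z_k\in\mathbb{C}_+:=\{z\in\mathbb{C}:\Re(z)\geq 0\}$ be nonzero and satisfy $\sum_{i=1}^k z_i^r=0$. Then $$\max_{i=1,\dots,k}\mathrm{Arg}(z_i)-\min_{i=1,\dots,k}\mathrm{Arg}(z_i)\geq\frac{\pi}{r}.$$
   Context: $\mathrm{Arg}$ denotes the principal value of the argument of a nonzero complex number. *)

theory Defs
  imports "HOL-Analysis.Analysis"
begin

end

theory Submission
  imports Defs
begin

theorem lemma2p2:
  fixes k r :: nat and z :: "nat \<Rightarrow> complex"
  assumes "k \<ge> 2" and "r \<ge> 2"
    and "\<And>i. i \<in> {1..k} \<Longrightarrow> z i \<noteq> 0"
    and "\<And>i. i \<in> {1..k} \<Longrightarrow> Re (z i) \<ge> 0"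
    and "(\<Sum>i=1..k. z i ^ r) = 0"
  shows "(MAX i\<in>{1..k}. Arg (z i)) - (MIN i\<in>{1..k}. Arg (z i)) \<ge> pi / real r"
proof (rule ccontr)
  define M where "M = (MAX i\<in>{1..k}. Arg (z i))"
  define m where "m = (MIN i\<in>{1..k}. Arg (z i))"
  define c where "c = real r * (m + M) / 2"
  assume "\<not> ?thesis"
  hence lt: "M - m < pi / real r" unfolding M_def m_def by simp
  have rpos: "real r > 0" using assms(2) by simp
  have lt2: "real r * (M - m) < pi" using lt rpos by (simp add: field_simps)
  have ne: "{1..k} \<noteq> {}" using assms(1) by auto
  have bnd: "m \<le> Arg (z i) \<and> Arg (z i) \<le> M" if "i \<in> {1..k}" for i
    unfolding m_def M_def using that by (auto intro!: Min_le Max_ge)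
  have pos: "Re (z i ^ r * cis (- c)) > 0" if i: "i \<in> {1..k}" for i
  proof -
    have p: "z i ^ r = rcis (cmod (z i) ^ r) (real r * Arg (z i))"
      by (metis DeMoivre2 rcis_cmod_Arg)
    have q: "rcis a b * cis (- c) = rcis a (b - c)" for a b
      by (simp add: rcis_def cis_mult mult.assoc)
    have e: "z i ^ r * cis (- c) = rcis (cmod (z i) ^ r) (real r * Arg (z i) - c)"
      unfolding p q ..
    have b: "m \<le> Arg (z i)" "Arg (z i) \<le> M" using bnd[OF i] by auto
    have "real r * m \<le> real r * Arg (z i)" "real r * Arg (z i) \<le> real r * M"
      using b rpos by auto
    hence "- (pi/2) < real r * Arg (z i) - c" "real r * Arg (z i) - c < pi/2"
      using lt2 unfolding c_def by (simp_all add: algebra_simps add_divide_distrib)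
    hence "cos (real r * Arg (z i) - c) > 0" by (rule cos_gt_zero_pi)
    moreover have "cmod (z i) ^ r > 0" using assms(3)[OF i] by simp
    ultimately show ?thesis unfolding e by (simp add: rcis_def)
  qed
  have "Re ((\<Sum>i=1..k. z i ^ r) * cis (- c)) = (\<Sum>i=1..k. Re (z i ^ r * cis (- c)))"
    by (simp add: sum_distrib_right)
  also have "\<dots> > 0" using pos ne by (intro sum_pos) auto
  finally show False unfolding assms(5) by simp
qed

end
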